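(* Let $\{\emptyset,\Omega\}=\mathcal{F}_0\subseteq\cdots\subseteq\mathcal{F}_n$ be $\sigma$-fields on a probability space and let $(\xi_i,\mathcal{F}_i)_{i=1,\dots,n}$ be supermartingale differences (each $\xi_i$ is $\mathcal{F}_i$-measurable, integrable, with $\mathbf{E}(\xi_i\mid\mathcal{F}_{i-1})\le0$). Suppose $\mathbf{E}|\xi_i|^\beta<\infty$ for a constant $\beta\in(1,2)$. Then for all $\lambda>0$, \[ \mathbf{E}\Big(\exp\big\{\lambda\xi_i-\lambda^\beta(\xi_i^+)^\beta\big\}\,\Big|\,\mathcal{F}_{i-1}\Big)\le\exp\Big\{\lambda^\beta\,\mathbf{E}\big((\xi_i^-)^\beta\mid\mathcal{F}_{i-1}\big)\Big\}, \] where $x^+=\max\{x,0\}$ and $x^-=-\min\{x,0\}$. *)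

theory Defs
  imports "HOL-Probability.Probability"
begin

end

theory Submission
  imports Defs
begin
lemma key_pos:
  fixes y b :: real assumes "1 < b" "b < 2" "0 \<le> y"
  shows "exp (y - y powr b) \<le> 1 + y"
proof (cases "y \<le> 1")
  case True
  have "y powr 2 \<le> y powr b" using powr_mono'[of b 2 y] assms True by simp
  hence "y^2 \<le> y powr b" using assms by (simp add: powr_realpow)
  hence "exp (y - y powr b) \<le> exp (y - y^2)" by simp
  also have "\<dots> \<le> exp (ln (1 + y))" using ln_one_plus_pos_lower_bound[of y] assms True by (simp del: exp_ln_iff exp_ln)
  also have "\<dots> = 1 + y" using assms by simp
  finally show ?thesis .
next
  case False
  have "y powr 1 \<le> y powr b" using powr_mono[of 1 b y] assms False by simp
  hence "y - y powr b \<le> 0" using False by simp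
  hence "exp (y - y powr b) \<le> 1" by simp
  thus ?thesis using assms by linarith
qed

lemma key_neg:
  fixes t b :: real assumes "1 < b" "b < 2" "0 \<le> t"
  shows "exp (- t) \<le> 1 - t + t powr b"
proof (cases "t \<le> 1")
  case True
  have "t powr 2 \<le> t powr b" using powr_mono'[of b 2 t] assms True by simp
  hence t2: "t^2 \<le> t powr b" using assms by (simp add: powr_realpow)
  have e: "1 + t \<le> exp t" by (rule exp_ge_add_one_self)
  have "exp (-t) = 1 / exp t" by (simp add: exp_minus field_simps)
  also have "\<dots> \<le> 1 / (1 + t)" using e assms by (intro divide_left_mono) auto
  also have "\<dots> \<le> 1 - t + t^2"
  proof -
    have "(1 - t + t^2) * (1 + t) = 1 + t^3" by (simp add: algebra_simps power2_eq_square power3_eq_cube)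
    hence "1 \<le> (1 - t + t^2) * (1 + t)" using assms by simp
    thus ?thesis using assms by (simp add: divide_le_eq)
  qed
  finally show ?thesis using t2 by simp
next
  case False
  have "t powr 1 \<le> t powr b" using powr_mono[of 1 b t] assms False by simp
  hence "1 \<le> 1 - t + t powr b" using False by simp
  moreover have "exp (-t) \<le> 1" using assms by simp
  ultimately show ?thesis by linarith
qed

lemma key:
  fixes y b :: real assumes "1 < b" "b < 2"
  shows "exp (y - (max y 0) powr b) \<le> 1 + y + (- min y 0) powr b"
proof (cases "0 \<le> y")
  case True thus ?thesis using key_pos[OF assms True] by simp
next
  case False
  thus ?thesis using key_neg[OF assms, of "-y"] by simp
qed

lemma key_lam:
  fixes x b lam :: real assumes "1 < b" "b < 2" "0 < lam"
  shows "exp (lam * x - lam powr b * (max x 0) powr b) \<le> 1 + lam * x + lam powr b * (- min x 0) powr b"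
proof -
  have a: "max (lam * x) 0 = lam * max x 0" "- min (lam * x) 0 = lam * (- min x 0)"
    using assms by (auto simp: max_def min_def mult_le_0_iff)
  have "(max (lam*x) 0) powr b = lam powr b * (max x 0) powr b"
    unfolding a using assms by (simp add: powr_mult)
  moreover have "(- min (lam*x) 0) powr b = lam powr b * (- min x 0) powr b"
    unfolding a(2) using assms by (subst powr_mult) auto
  ultimately show ?thesis using key[OF assms(1,2), of "lam * x"] by simp
qed

theorem lemma5p1:
  fixes M :: "'a measure" and F :: "nat \<Rightarrow> 'a measure"
    and \<xi> :: "nat \<Rightarrow> 'a \<Rightarrow> real" and n :: nat and \<beta> :: real
  assumes prob: "prob_space M"
    and subalg: "\<And>k. k \<le> n \<Longrightarrow> subalgebra M (F k)"
    and mono: "\<And>j k. j \<le> k \<Longrightarrow> k \<le> n \<Longrightarrow> sets (F j) \<subseteq> sets (F k)"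
    and F0: "sets (F 0) = {{}, space M}"
    and meas: "\<And>k. 1 \<le> k \<Longrightarrow> k \<le> n \<Longrightarrow> \<xi> k \<in> borel_measurable (F k)"
    and integr: "\<And>k. 1 \<le> k \<Longrightarrow> k \<le> n \<Longrightarrow> integrable M (\<xi> k)"
    and supmart: "\<And>k. 1 \<le> k \<Longrightarrow> k \<le> n \<Longrightarrow>
                    AE x in M. real_cond_exp M (F (k - 1)) (\<xi> k) x \<le> 0"
    and beta: "1 < \<beta>" "\<beta> < 2"
    and moment: "\<And>k. 1 \<le> k \<Longrightarrow> k \<le> n \<Longrightarrow> integrable M (\<lambda>x. \<bar>\<xi> k x\<bar> powr \<beta>)"
  shows "\<forall>i \<in> {1..n}. \<forall>lam::real. lam > 0 \<longrightarrow>
    (AE x in M.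
       real_cond_exp M (F (i - 1))
         (\<lambda>y. exp (lam * \<xi> i y - lam powr \<beta> * (max (\<xi> i y) 0) powr \<beta>)) x
       \<le> exp (lam powr \<beta> * real_cond_exp M (F (i - 1)) (\<lambda>y. (- min (\<xi> i y) 0) powr \<beta>) x))"
proof (intro ballI allI impI)
  fix i and lam :: real
  assume i: "i \<in> {1..n}" and lam: "0 < lam"
  interpret P: prob_space M by (rule prob)
  have i1: "1 \<le> i" "i \<le> n" using i by auto
  have sub: "subalgebra M (F (i - 1))" using subalg i1 by simp
  interpret S: finite_measure_subalgebra M "F (i - 1)"
    by unfold_locales (rule sub)
  have subi: "subalgebra M (F i)" using subalg i1 by simp
  have mxi[measurable]: "\<xi> i \<in> borel_measurable M"
    using measurable_from_subalg[OF subi meas[OF i1]] .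
  have ixi: "integrable M (\<xi> i)" using integr i1 by simp
  define m where "m = (\<lambda>y. (- min (\<xi> i y) 0) powr \<beta>)"
  define g where "g = (\<lambda>y. exp (lam * \<xi> i y - lam powr \<beta> * (max (\<xi> i y) 0) powr \<beta>))"
  define h where "h = (\<lambda>y. 1 + lam * \<xi> i y + lam powr \<beta> * m y)"
  have mm[measurable]: "m \<in> borel_measurable M" unfolding m_def by measurable
  have gm[measurable]: "g \<in> borel_measurable M" unfolding g_def by measurable
  have im: "integrable M m"
  proof (rule Bochner_Integration.integrable_bound[OF moment[OF i1]])
    show "m \<in> borel_measurable M" by (rule mm)
    show "AE x in M. norm (m x) \<le> norm (\<bar>\<xi> i x\<bar> powr \<beta>)"
      unfolding m_def using beta by (auto intro!: powr_mono2)
  qed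
  have ih1: "integrable M (\<lambda>y. 1 + lam * \<xi> i y)" using ixi by auto
  have ih2: "integrable M (\<lambda>y. lam powr \<beta> * m y)" using im by auto
  have ih: "integrable M h" unfolding h_def using Bochner_Integration.integrable_add[OF ih1 ih2] by (simp add: add.assoc)
  have gh: "\<And>y. g y \<le> h y" unfolding g_def h_def m_def using key_lam[OF beta lam] by simp
  have ig: "integrable M g"
  proof (rule Bochner_Integration.integrable_bound[OF ih gm])
    show "AE x in M. norm (g x) \<le> norm (h x)"
      using gh unfolding g_def by (auto intro: order_trans[OF _ abs_ge_self])
  qed
  have c1: "AE x in M. real_cond_exp M (F (i - 1)) g x \<le> real_cond_exp M (F (i - 1)) h x"
    using gh ig ih by (intro S.real_cond_exp_mono) auto
  have c2: "AE x in M. real_cond_exp M (F (i - 1)) h x =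
      real_cond_exp M (F (i - 1)) (\<lambda>y. 1 + lam * \<xi> i y) x + real_cond_exp M (F (i - 1)) (\<lambda>y. lam powr \<beta> * m y) x"
    unfolding h_def using S.real_cond_exp_add[OF ih1 ih2] by (simp add: add.assoc)
  have c3: "AE x in M. real_cond_exp M (F (i - 1)) (\<lambda>y. 1 + lam * \<xi> i y) x =
      real_cond_exp M (F (i - 1)) (\<lambda>y. 1) x + real_cond_exp M (F (i - 1)) (\<lambda>y. lam * \<xi> i y) x"
    using S.real_cond_exp_add[of "\<lambda>y. 1" "\<lambda>y. lam * \<xi> i y"] ixi by auto
  have c4: "AE x in M. real_cond_exp M (F (i - 1)) (\<lambda>y. 1) x = 1"
    by (rule S.real_cond_exp_F_meas) auto
  have c5: "AE x in M. real_cond_exp M (F (i - 1)) (\<lambda>y. lam * \<xi> i y) x = lam * real_cond_exp M (F (i - 1)) (\<xi> i) x"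
    using S.real_cond_exp_cmult[OF ixi] by simp
  have c6: "AE x in M. real_cond_exp M (F (i - 1)) (\<lambda>y. lam powr \<beta> * m y) x = lam powr \<beta> * real_cond_exp M (F (i - 1)) m x"
    using S.real_cond_exp_cmult[OF im] by simp
  have c7: "AE x in M. real_cond_exp M (F (i - 1)) (\<xi> i) x \<le> 0" using supmart[OF i1] .
  have "AE x in M. real_cond_exp M (F (i - 1)) g x \<le> exp (lam powr \<beta> * real_cond_exp M (F (i - 1)) m x)"
  proof (rule AE_mp[OF AE_conjI[OF c1 AE_conjI[OF c2 AE_conjI[OF c3 AE_conjI[OF c4 AE_conjI[OF c5 AE_conjI[OF c6 c7]]]]]]], rule AE_I2, clarify)
    fix x
    let ?a = "real_cond_exp M (F (i - 1)) (\<xi> i) x"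
    let ?b = "lam powr \<beta> * real_cond_exp M (F (i - 1)) m x"
    assume "real_cond_exp M (F (i - 1)) g x \<le> real_cond_exp M (F (i - 1)) h x"
      "real_cond_exp M (F (i - 1)) h x =
      real_cond_exp M (F (i - 1)) (\<lambda>y. 1 + lam * \<xi> i y) x + real_cond_exp M (F (i - 1)) (\<lambda>y. lam powr \<beta> * m y) x"
      "real_cond_exp M (F (i - 1)) (\<lambda>y. 1 + lam * \<xi> i y) x =
      real_cond_exp M (F (i - 1)) (\<lambda>y. 1) x + real_cond_exp M (F (i - 1)) (\<lambda>y. lam * \<xi> i y) x"
      "real_cond_exp M (F (i - 1)) (\<lambda>y. 1) x = 1"
      "real_cond_exp M (F (i - 1)) (\<lambda>y. lam * \<xi> i y) x = lam * ?a"
      "real_cond_exp M (F (i - 1)) (\<lambda>y. lam powr \<beta> * m y) x = ?b"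
      "?a \<le> 0"
    hence "real_cond_exp M (F (i - 1)) g x \<le> 1 + lam * ?a + ?b" by simp
    also have "\<dots> \<le> 1 + ?b" using \<open>?a \<le> 0\<close> lam by (simp add: mult_nonneg_nonpos)
    also have "\<dots> \<le> exp ?b" by (rule exp_ge_add_one_self)
    finally show "real_cond_exp M (F (i - 1)) g x \<le> exp ?b" .
  qed
  thus "AE x in M.
       real_cond_exp M (F (i - 1))
         (\<lambda>y. exp (lam * \<xi> i y - lam powr \<beta> * (max (\<xi> i y) 0) powr \<beta>)) x
       \<le> exp (lam powr \<beta> * real_cond_exp M (F (i - 1)) (\<lambda>y. (- min (\<xi> i y) 0) powr \<beta>) x)"
    unfolding g_def m_def .
qed

end
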